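(* Let $r\ge1$ and $\mu\in\mathcal P_r$. (i) If $\mu\in\mathcal P_s$ for some $s>r$, then $\lim_{n\to\infty}n^{1/r-1/s}d_r(\delta^{\mathbf u_n}_\bullet,\mu)=0$. (ii) If ${\rm supp}\,\mu$ is bounded, then $\limsup_{n\to\infty}n^{1/r}d_r(\delta^{\mathbf u_n}_\bullet,\mu)<+\infty$.
   Context: $\mathcal P$ denotes the set of Borel probability measures on $\mathbb R$; $\mathcal P_r=\{\mu\in\mathcal P:\int|x|^r{\rm d}\mu(x)<\infty\}$. For $\mu\in\mathcal P$, $F_\mu(x)=\mu(]-\infty,x])$ and $F_\mu^{-1}(t)=\sup\{x: F_\mu(x)\le t\}$, $t\in]0,1[$. $d_r(\mu,\nu)=\big(\int_0^1|F_\mu^{-1}(t)-F_\nu^{-1}(t)|^r{\rm d}t\big)^{1/r}$ on $\mathcal P_r$. With $\Xi_n=\{\mathbf x\in\mathbb R^n:x_1\le\dots\le x_n\}$ and $\delta^{\mathbf u_n}_{\mathbf x}=\frac1n\sum_{i=1}^n\delta_{x_i}$, set $d_r(\delta^{\mathbf u_n}_\bullet,\mu)=\min_{\mathbf x\in\Xi_n}d_r(\delta^{\mathbf u_n}_{\mathbf x},\mu)$ (the minimum is attained). *)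

theory Defs
  imports "HOL-Probability.Probability"
begin

definition cdf_of :: "real measure \<Rightarrow> real \<Rightarrow> real" where
  "cdf_of M x = measure M {..x}"

text \<open>Quantile function F_mu^{-1}(t) = sup {x. F_mu(x) \<le> t}, used for t in ]0,1[.\<close>
definition quantile_of :: "real measure \<Rightarrow> real \<Rightarrow> real" where
  "quantile_of M t = Sup {x. cdf_of M x \<le> t}"

definition has_moment :: "real \<Rightarrow> real measure \<Rightarrow> bool" where
  "has_moment r M \<longleftrightarrow> integrable M (\<lambda>x. \<bar>x\<bar> powr r)"

definition wdist :: "real \<Rightarrow> real measure \<Rightarrow> real measure \<Rightarrow> real" where
  "wdist r M N = (LINT t:{0<..<1}|lborel. \<bar>quantile_of M t - quantile_of N t\<bar> powr r) powr (1/r)"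

text \<open>Uniform empirical measure (1/n) sum_{i<n} delta_{x_i} as a Borel measure (n \<ge> 1).\<close>
definition emp_measure :: "nat \<Rightarrow> (nat \<Rightarrow> real) \<Rightarrow> real measure" where
  "emp_measure n x = distr (measure_pmf (pmf_of_set {..<n})) borel x"

text \<open>Xi_n: nondecreasing n-tuples (entries indexed 0..n-1; other values irrelevant).\<close>
definition Xi :: "nat \<Rightarrow> (nat \<Rightarrow> real) set" where
  "Xi n = {x. \<forall>i j. i \<le> j \<longrightarrow> j < n \<longrightarrow> x i \<le> x j}"

text \<open>d_r(delta^{u_n}_bullet, mu) = min over Xi_n (the minimum is attained, so Inf = min).\<close>
definition opt_wdist :: "real \<Rightarrow> nat \<Rightarrow> real measure \<Rightarrow> real" where
  "opt_wdist r n M = Inf ((\<lambda>x. wdist r (emp_measure n x) M) ` Xi n)"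

definition supp_of :: "real measure \<Rightarrow> real set" where
  "supp_of M = {x. \<forall>e>0. measure M (ball x e) > 0}"

end

theory Submission imports Defs begin

lemma cdf_of_eq: "cdf_of M = cdf M"
  by (auto simp: cdf_of_def cdf_def)

context
  fixes M :: "real measure"
  assumes RD: "real_distribution M"
begin

interpretation real_distribution M by (rule RD)

lemma q_ne: "0 < t \<Longrightarrow> {x. cdf M x \<le> t} \<noteq> {}"
proof -
  assume "0 < t"
  from order_tendstoD(2)[OF cdf_lim_at_bot this] obtain y where "cdf M y < t"
    by (metis eventually_happens' trivial_limit_at_bot_linorder)
  then show ?thesis by (auto intro!: exI[of _ y])
qed

lemma q_bdd: "t < 1 \<Longrightarrow> bdd_above {x. cdf M x \<le> t}"
proof -
  assume "t < 1"
  from order_tendstoD(1)[OF cdf_lim_at_top_prob this] obtain y where *: "\<forall>z\<ge>y. t < cdf M z"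
    by (auto simp: eventually_at_top_linorder)
  show ?thesis
  proof (intro bdd_aboveI[of _ y])
    fix x assume "x \<in> {x. cdf M x \<le> t}"
    then show "x \<le> y" using * by (metis mem_Collect_eq not_le order_less_imp_le order.strict_iff_not)
  qed
qed

lemma Q1: "0 < t \<Longrightarrow> t < 1 \<Longrightarrow> cdf M x \<le> t \<Longrightarrow> x \<le> quantile_of M t"
  unfolding quantile_of_def cdf_of_eq by (rule cSup_upper) (auto intro: q_bdd)

lemma Q2: "0 < t \<Longrightarrow> t < 1 \<Longrightarrow> x < quantile_of M t \<Longrightarrow> cdf M x \<le> t"
proof -
  assume a: "0 < t" "t < 1" "x < quantile_of M t"
  then obtain y where "cdf M y \<le> t" "x < y"
    unfolding quantile_of_def cdf_of_eq using less_cSupE[OF _ q_ne[OF a(1)]] by blast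
  then show ?thesis using cdf_nondecreasing[of x y] by simp
qed

lemma Q3: "0 < t \<Longrightarrow> t < 1 \<Longrightarrow> quantile_of M t < x \<Longrightarrow> t < cdf M x"
  by (meson Q1 not_less)

lemma Q_mono: "0 < s \<Longrightarrow> s \<le> t \<Longrightarrow> t < 1 \<Longrightarrow> quantile_of M s \<le> quantile_of M t"
proof (rule ccontr)
  assume a: "0 < s" "s \<le> t" "t < 1" "\<not> quantile_of M s \<le> quantile_of M t"
  then have "quantile_of M t < quantile_of M s" by simp
  from Q2[OF _ _ this] a have "cdf M (quantile_of M t) \<le> s" by simp
  have "\<exists>y>quantile_of M t. cdf M y \<le> s"
  proof -
    obtain z where "quantile_of M t < z" "z < quantile_of M s"
      using dense[OF \<open>quantile_of M t < quantile_of M s\<close>] by blast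
    with Q2[of s z] a show ?thesis by auto
  qed
  then obtain y where "y > quantile_of M t" "cdf M y \<le> s" by blast
  with Q3[of t y] a show False by linarith
qed

lemma Q4: "0 < t \<Longrightarrow> t < 1 \<Longrightarrow> quantile_of M t \<le> x \<Longrightarrow> t \<le> cdf M x"
proof (rule ccontr)
  assume a: "0 < t" "t < 1" "quantile_of M t \<le> x" "\<not> t \<le> cdf M x"
  then have "cdf M x < t" by simp
  from order_tendstoD(2)[OF cdf_is_right_cont[of x, unfolded continuous_within] this]
  obtain b where "x < b" "\<forall>y>x. y < b \<longrightarrow> cdf M y < t"
    by (auto simp: eventually_at_right_field)
  then have "cdf M ((x + b)/2) < t" by simp
  from Q1[OF a(1,2) less_imp_le[OF this]] a(3) \<open>x < b\<close> show False by simp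
qed

lemma Q_meas[measurable]: "quantile_of M \<in> borel_measurable (restrict_space borel {0<..<1})"
  by (intro borel_measurable_mono_on_fnc mono_onI) (auto intro: Q_mono)

lemma cdf_distr_Q: "measure lborel {\<omega>\<in>{0<..<1}. quantile_of M \<omega> \<le> x} = cdf M x"
proof -
  let ?S = "{\<omega>\<in>{0<..<1}. quantile_of M \<omega> \<le> x}"
  have 0: "0 \<le> cdf M x" "cdf M x \<le> 1" by (auto simp: cdf_nonneg cdf_bounded_prob)
  have A: "\<omega> \<in> ?S" if "\<omega> \<in> {0<..<1}" "\<omega> < cdf M x" for \<omega>
    using Q2[of \<omega> x] that by force
  have B: "\<omega> \<le> cdf M x" if "\<omega> \<in> ?S" for \<omega>
    using Q4[of \<omega> x] that by force
  show ?thesis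
  proof (cases "cdf M x \<in> ?S")
    case True
    then have "?S = {0<..cdf M x}" using A B 0 by (force simp: less_le)
    then show ?thesis using 0 by simp
  next
    case False
    then have "?S = {0<..<cdf M x}" using A B 0 by (force simp: less_le)
    then show ?thesis using 0 by simp
  qed
qed

lemma distr_Q: "distr (restrict_space lborel {0<..<1}) borel (quantile_of M) = M"
proof (intro cdf_unique ext)
  let ?\<Omega> = "restrict_space lborel {0<..<1}::real measure"
  interpret \<Omega>: prob_space ?\<Omega>
    by (auto simp add: emeasure_restrict_space space_restrict_space intro!: prob_spaceI)
  show "real_distribution (distr ?\<Omega> borel (quantile_of M))"
    by auto
  show "real_distribution M" by (rule RD)
  fix x
  have "cdf (distr ?\<Omega> borel (quantile_of M)) x = measure lborel {\<omega>\<in>{0<..<1}. quantile_of M \<omega> \<le> x}"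
    by (subst cdf_def)
       (auto simp: measure_distr space_restrict_space measure_restrict_space
             intro!: arg_cong2[where f="measure"])
  also have "\<dots> = cdf M x" by (rule cdf_distr_Q)
  finally show "cdf (distr ?\<Omega> borel (quantile_of M)) x = cdf M x" .
qed

lemma Q_integral:
  fixes f :: "real \<Rightarrow> real"
  assumes f[measurable]: "f \<in> borel_measurable borel" and int: "integrable M f"
  shows "set_integrable lborel {0<..<1} (\<lambda>t. f (quantile_of M t))"
    and "(LINT t:{0<..<1}|lborel. f (quantile_of M t)) = integral\<^sup>L M f"
proof -
  let ?\<Omega> = "restrict_space lborel {0<..<1}::real measure"
  have m: "quantile_of M \<in> measurable ?\<Omega> borel" by measurable
  have "integrable ?\<Omega> (\<lambda>t. f (quantile_of M t))"
    using int integrable_distr_eq[OF m f] distr_Q by simp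
  then show "set_integrable lborel {0<..<1} (\<lambda>t. f (quantile_of M t))"
    by (simp add: set_integrable_def integrable_restrict_space)
  have "integral\<^sup>L M f = integral\<^sup>L ?\<Omega> (\<lambda>t. f (quantile_of M t))"
    using integral_distr[OF m f] distr_Q by simp
  also have "\<dots> = (LINT t:{0<..<1}|lborel. f (quantile_of M t))"
    by (simp add: set_lebesgue_integral_def integral_restrict_space)
  finally show "(LINT t:{0<..<1}|lborel. f (quantile_of M t)) = integral\<^sup>L M f" by simp
qed

end

lemma powr_diff_bound:
  fixes u v r :: real assumes "r \<ge> 0"
  shows "\<bar>u - v\<bar> powr r \<le> 2 powr r * (\<bar>u\<bar> powr r + \<bar>v\<bar> powr r)"
proof -
  have "\<bar>u - v\<bar> \<le> 2 * max \<bar>u\<bar> \<bar>v\<bar>" by linarith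
  then have "\<bar>u - v\<bar> powr r \<le> (2 * max \<bar>u\<bar> \<bar>v\<bar>) powr r"
    using assms by (intro powr_mono2) auto
  also have "\<dots> = 2 powr r * max \<bar>u\<bar> \<bar>v\<bar> powr r" by (simp add: powr_mult)
  also have "max \<bar>u\<bar> \<bar>v\<bar> powr r \<le> \<bar>u\<bar> powr r + \<bar>v\<bar> powr r"
    by (cases "\<bar>u\<bar> \<le> \<bar>v\<bar>") (auto simp: max_def)
  finally show ?thesis by simp
qed

lemma bounded_set_integrable:
  fixes f :: "real \<Rightarrow> real"
  assumes [measurable]: "f \<in> borel_measurable borel" "A \<in> sets borel"
    and "emeasure lborel A < \<infinity>" and "\<And>t. t \<in> A \<Longrightarrow> \<bar>f t\<bar> \<le> C"
  shows "set_integrable lborel A f"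
  unfolding set_integrable_def
  by (rule integrableI_bounded_set_indicator[where B=C]) (use assms in auto)

lemma set_integral_indicator_sub:
  fixes f :: "real \<Rightarrow> real"
  assumes "B \<subseteq> A"
  shows "(LINT t:A|M. indicator B t * f t) = (LINT t:B|M. f t)"
    and "set_integrable M A (\<lambda>t. indicator B t * f t) \<longleftrightarrow> set_integrable M B f"
proof -
  have eq: "(\<lambda>t. indicator A t * (indicator B t * f t)) = (\<lambda>t. indicator B t * f t)"
    using assms by (intro ext) (auto simp: indicator_def)
  then show "(LINT t:A|M. indicator B t * f t) = (LINT t:B|M. f t)"
    "set_integrable M A (\<lambda>t. indicator B t * f t) \<longleftrightarrow> set_integrable M B f"
    unfolding set_lebesgue_integral_def set_integrable_def real_scaleR_def eq by simp_all
qed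

lemma set_integral_nonneg:
  fixes f :: "'a \<Rightarrow> real"
  shows "(\<And>x. x \<in> A \<Longrightarrow> 0 \<le> f x) \<Longrightarrow> 0 \<le> (LINT x:A|M. f x)"
  unfolding set_lebesgue_integral_def
  by (intro Bochner_Integration.integral_nonneg) (auto simp: indicator_def)

lemma emeasure_Ico_fin[simp]: "emeasure lborel {u..<v::real} < \<top>"
  by (cases "u \<le> v") auto

lemma emeasure_Ioo_fin[simp]: "emeasure lborel {u<..<v::real} < \<top>"
  by (cases "u \<le> v") auto


lemma trunc_bound:
  fixes y K r s :: real
  assumes "0 \<le> y" "0 < K" "0 < r" "r < s"
  shows "y powr r \<le> K powr r * (1 + y powr s / K powr s)"
proof (cases "y \<le> K")
  case True
  then have "y powr r \<le> K powr r" using assms by (intro powr_mono2) auto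
  also have "\<dots> \<le> K powr r * (1 + y powr s / K powr s)" using assms by simp
  finally show ?thesis .
next
  case False
  then have yK: "K < y" by simp
  have "y powr r = y powr s * y powr (r - s)"
    using assms yK by (simp add: powr_add[symmetric])
  also have "\<dots> \<le> y powr s * K powr (r - s)"
    using assms yK by (intro mult_left_mono powr_mono2') auto
  also have "K powr (r - s) = K powr r / K powr s"
    by (simp add: powr_diff)
  also have "y powr s * (K powr r / K powr s) \<le> K powr r * (1 + y powr s / K powr s)"
    using assms by (simp add: field_simps)
  finally show ?thesis .
qed

lemma set_integral_tendsto_0:
  fixes f :: "real \<Rightarrow> real"
  assumes fi: "set_integrable lborel S f" and AS: "\<And>n. A n \<subseteq> S" and Am[measurable]: "\<And>n. A n \<in> sets borel"
    and ev: "\<And>t. eventually (\<lambda>n. t \<notin> A n) sequentially"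
  shows "(\<lambda>n. LINT t:A n|lborel. f t) \<longlonglongrightarrow> 0"
proof -
  have fm: "(\<lambda>t. indicator S t * f t) \<in> borel_measurable lborel"
    using fi by (simp add: set_integrable_def borel_measurable_integrable)
  have eq: "indicator (A n) t * f t = indicator (A n) t * (indicator S t * f t)" for n t
    using AS[of n] by (auto simp: indicator_def)
  have "(\<lambda>n. integral\<^sup>L lborel (\<lambda>t. indicator (A n) t * (indicator S t * f t))) \<longlonglongrightarrow> integral\<^sup>L lborel (\<lambda>t::real. 0::real)"
  proof (rule integral_dominated_convergence[where w="\<lambda>t. norm (indicator S t * f t)"
      and s="\<lambda>n t. indicator (A n) t * (indicator S t * f t)" and f="\<lambda>t. 0" and M=lborel])
    show "(\<lambda>t::real. 0::real) \<in> borel_measurable lborel" by simp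
    show "(\<lambda>t. indicator (A n) t * (indicator S t * f t)) \<in> borel_measurable lborel" for n
      using fm by measurable
    show "integrable lborel (\<lambda>t. norm (indicator S t * f t))"
      using fi by (simp add: set_integrable_def)
    show "AE t in lborel. (\<lambda>n. indicator (A n) t * (indicator S t * f t)) \<longlonglongrightarrow> 0"
    proof (intro AE_I2)
      fix t
      show "(\<lambda>n. indicator (A n) t * (indicator S t * f t)) \<longlonglongrightarrow> 0"
      proof (rule tendsto_eventually)
        show "\<forall>\<^sub>F n in sequentially. indicator (A n) t * (indicator S t * f t) = 0"
          using ev[of t] by (rule eventually_mono) simp
      qed
    qed
    show "AE t in lborel. norm (indicator (A n) t * (indicator S t * f t)) \<le> norm (indicator S t * f t)" for n
      by (intro AE_I2) (auto simp: indicator_def)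
  qed
  then show ?thesis
    by (simp add: set_lebesgue_integral_def eq)
qed

lemma rate_bound:
  fixes f :: "real \<Rightarrow> real" and r s :: real and n :: nat
  assumes rs: "0 < r" "r < s" and n: "n > 0"
    and A[measurable]: "A \<in> sets borel" and mA: "measure lborel A = 1/n" and fA: "emeasure lborel A < \<top>"
    and iS: "set_integrable lborel A (\<lambda>t. \<bar>f t\<bar> powr s)"
    and ir: "set_integrable lborel A (\<lambda>t. \<bar>f t\<bar> powr r)"
  shows "real n powr (1 - r/s) * (LINT t:A|lborel. \<bar>f t\<bar> powr r)
      \<le> 2 * ((LINT t:A|lborel. \<bar>f t\<bar> powr s) + 1/n) powr (r/s)"
proof -
  define \<alpha> where "\<alpha> = (LINT t:A|lborel. \<bar>f t\<bar> powr s)"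
  define w where "w = \<alpha> + 1/n"
  have a0: "0 \<le> \<alpha>" unfolding \<alpha>_def by (intro set_integral_nonneg) auto
  have npos: "(0::real) < n" using n by simp
  have "0 < 1 / real n" using npos by simp
  then have w0: "0 < w" unfolding w_def using a0 by linarith
  define K where "K = (w * n) powr (1/s)"
  have K0: "0 < K" unfolding K_def using w0 npos by simp
  have Kr: "K powr r = (w * n) powr (r/s)" unfolding K_def using w0 npos by (simp add: powr_powr)
  have Ks: "K powr s = w * n" unfolding K_def using w0 npos rs by (simp add: powr_powr)
  define P where "P = (w * n) powr (r/s)"
  have P0: "0 \<le> P" unfolding P_def by simp
  have cint: "set_integrable lborel A (\<lambda>_. c)" for c :: real
    by (rule bounded_set_integrable[where C="\<bar>c\<bar>"]) (use fA in auto)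
  have fA': "emeasure lborel A \<noteq> \<infinity>" using fA by (simp add: less_top)
  have "(LINT t:A|lborel. \<bar>f t\<bar> powr r) \<le> (LINT t:A|lborel. P + (P / (w * n)) * \<bar>f t\<bar> powr s)"
  proof (rule set_integral_mono[OF ir])
    show "set_integrable lborel A (\<lambda>t. P + (P / (w * n)) * \<bar>f t\<bar> powr s)"
      using cint iS by (intro set_integral_add(1) set_integrable_mult_right) auto
    fix t
    have "\<bar>f t\<bar> powr r \<le> K powr r * (1 + \<bar>f t\<bar> powr s / K powr s)"
      by (rule trunc_bound) (use K0 rs in auto)
    also have "\<dots> = P + (P / (w * n)) * \<bar>f t\<bar> powr s"
      unfolding Kr Ks P_def by (simp add: field_simps)
    finally show "\<bar>f t\<bar> powr r \<le> P + (P / (w * n)) * \<bar>f t\<bar> powr s" .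
  qed
  also have "\<dots> = P / n + (P / (w * n)) * \<alpha>"
    using cint iS mA fA' unfolding \<alpha>_def
    by (simp add: set_integral_add(2) set_integral_const)
  also have "\<dots> \<le> P / n + (P / (w * n)) * w"
    using P0 w0 npos unfolding w_def by (intro add_left_mono mult_left_mono) auto
  also have "\<dots> = 2 * P / n" using w0 npos by (simp add: field_simps)
  finally have le: "(LINT t:A|lborel. \<bar>f t\<bar> powr r) \<le> 2 * P / n" .
  have "real n powr (1 - r/s) * (LINT t:A|lborel. \<bar>f t\<bar> powr r) \<le> real n powr (1 - r/s) * (2 * P / n)"
    using le by (intro mult_left_mono) auto
  also have "real n powr (1 - r/s) * (2 * P / n) = 2 * w powr (r/s)"
  proof -
    have "P = w powr (r/s) * real n powr (r/s)" unfolding P_def using w0 npos by (simp add: powr_mult)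
    moreover have "real n powr (1 - r/s) * real n powr (r/s) = n"
      using npos by (simp add: powr_add[symmetric])
    ultimately show ?thesis using npos by (simp add: field_simps)
  qed
  finally show ?thesis unfolding w_def \<alpha>_def .
qed

lemma emp_cdf:
  assumes "n \<ge> 1"
  shows "cdf_of (emp_measure n x) y = card {i\<in>{..<n}. x i \<le> y} / n"
proof -
  have ne: "{..<n} \<noteq> {}" using assms by (simp add: lessThan_empty_iff)
  have "cdf_of (emp_measure n x) y = measure (measure_pmf (pmf_of_set {..<n})) (x -` {..y})"
    unfolding cdf_of_def emp_measure_def by (simp add: measure_distr)
  also have "\<dots> = card ({..<n} \<inter> x -` {..y}) / card {..<n}"
    using ne by (simp add: measure_pmf_of_set)
  also have "{..<n} \<inter> x -` {..y} = {i\<in>{..<n}. x i \<le> y}" by auto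
  finally show ?thesis by simp
qed

lemma emp_card_le:
  assumes "x \<in> Xi n" "k < n"
  shows "card {i\<in>{..<n}. x i \<le> y} \<le> k \<longleftrightarrow> y < x k"
proof
  assume "y < x k"
  then have "{i\<in>{..<n}. x i \<le> y} \<subseteq> {..<k}"
  proof (intro subsetI)
    fix i assume i: "i \<in> {i\<in>{..<n}. x i \<le> y}"
    show "i \<in> {..<k}"
    proof (rule ccontr)
      assume "i \<notin> {..<k}"
      then have "x k \<le> x i" using assms i unfolding Xi_def by auto
      then show False using i \<open>y < x k\<close> by auto
    qed
  qed
  then show "card {i\<in>{..<n}. x i \<le> y} \<le> k"
    using card_mono[of "{..<k}"] by fastforce
next
  assume c: "card {i\<in>{..<n}. x i \<le> y} \<le> k"
  show "y < x k"
  proof (rule ccontr)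
    assume "\<not> y < x k"
    then have "{..k} \<subseteq> {i\<in>{..<n}. x i \<le> y}"
    proof (intro subsetI)
      fix i assume "i \<in> {..k}"
      then have "i \<le> k" by simp
      then have "x i \<le> x k" "i < n" using assms unfolding Xi_def by auto
      then show "i \<in> {i\<in>{..<n}. x i \<le> y}" using \<open>\<not> y < x k\<close> by auto
    qed
    then have "card {..k} \<le> card {i\<in>{..<n}. x i \<le> y}"
      by (intro card_mono) auto
    with c show False by simp
  qed
qed

lemma emp_quantile:
  assumes "n \<ge> 1" "x \<in> Xi n" "0 < t" "t < 1"
  shows "quantile_of (emp_measure n x) t = x (nat \<lfloor>t * n\<rfloor>)"
proof -
  let ?k = "nat \<lfloor>t * n\<rfloor>"
  have kn: "?k < n"
  proof -
    have "t * n < n" using assms by simp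
    then have "\<lfloor>t * n\<rfloor> < int n" by linarith
    moreover have "0 \<le> \<lfloor>t * n\<rfloor>" using assms by simp
    ultimately show ?thesis using nat_less_iff by blast
  qed
  have "{y. cdf_of (emp_measure n x) y \<le> t} = {..< x ?k}"
  proof -
    have "cdf_of (emp_measure n x) y \<le> t \<longleftrightarrow> y < x ?k" for y
    proof -
      let ?c = "card {i\<in>{..<n}. x i \<le> y}"
      have "cdf_of (emp_measure n x) y \<le> t \<longleftrightarrow> real ?c \<le> t * n"
        using assms by (simp add: emp_cdf divide_le_eq)
      also have "\<dots> \<longleftrightarrow> int ?c \<le> \<lfloor>t * n\<rfloor>"
        by (simp add: le_floor_iff)
      also have "\<dots> \<longleftrightarrow> ?c \<le> ?k"
        using assms by (intro le_nat_iff[symmetric]) simp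
      also have "\<dots> \<longleftrightarrow> y < x ?k" by (rule emp_card_le[OF assms(2) kn])
      finally show ?thesis .
    qed
    then show ?thesis by auto
  qed
  then show ?thesis unfolding quantile_of_def by simp
qed


context
  fixes M :: "real measure"
  assumes RD: "real_distribution M"
begin

lemma D:
  fixes r :: real and n :: nat
  assumes r: "r \<ge> 1" and n: "n \<ge> 2"
    and qi: "set_integrable lborel {0<..<1} (\<lambda>t. \<bar>quantile_of M t\<bar> powr r)"
  defines "a \<equiv> quantile_of M (1/n)" and "b \<equiv> quantile_of M (1 - 1/n)"
  shows "opt_wdist r n M \<le> (2 powr r * (\<bar>a\<bar> powr r / n + (LINT t:{0<..<1/n}|lborel. \<bar>quantile_of M t\<bar> powr r))
      + 2 powr r * (\<bar>b\<bar> powr r / n + (LINT t:{1-1/n..<1}|lborel. \<bar>quantile_of M t\<bar> powr r))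
      + (b - a) powr r / n) powr (1/r)"
proof -
  define q where "q = quantile_of M"
  define g where "g u = q (min (max u (1/n)) (1-1/n))" for u
  have npos: "(0::real) < n" using n by simp
  have n1: "1/n \<le> 1-1/(n::real)" "0 < 1/(n::real)" "1-1/(n::real) < 1"
    using n by (auto simp: field_simps)
  have qm: "0 < u \<Longrightarrow> u \<le> v \<Longrightarrow> v < 1 \<Longrightarrow> q u \<le> q v" for u v
    unfolding q_def by (rule Q_mono[OF RD])
  have cl: "1/n \<le> min (max u (1/n)) (1-1/n)" "min (max u (1/n)) (1-1/n) \<le> 1-1/n" for u
    using n1 by (auto simp: min_def max_def)
  have gm: "g u \<le> g v" if "u \<le> v" for u v
    unfolding g_def
  proof (rule qm)
    show "0 < min (max u (1/n)) (1-1/n)" using cl[of u] n1 by linarith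
    show "min (max v (1/n)) (1-1/n) < 1" using cl[of v] n1 by linarith
    show "min (max u (1/n)) (1-1/n) \<le> min (max v (1/n)) (1-1/n)" using that by (auto simp: min_def max_def)
  qed
  have ga: "g u = a" if "u \<le> 1/n" for u
  proof -
    have "min (max u (1/n)) (1-1/n) = 1/n" using n1 that by linarith
    then show ?thesis unfolding g_def a_def q_def by simp
  qed
  have gb: "g u = b" if "1-1/n \<le> u" for u
  proof -
    have "min (max u (1/n)) (1-1/n) = 1-1/n" using n1 that by linarith
    then show ?thesis unfolding g_def b_def q_def by simp
  qed
  have gq: "g u = q u" if "1/n \<le> u" "u \<le> 1-1/n" for u
  proof -
    have "min (max u (1/n)) (1-1/n) = u" using n1 that by linarith
    then show ?thesis unfolding g_def by simp
  qed
  have gab: "a \<le> g u" "g u \<le> b" for u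
    using gm[of "min u (1/n)" u] gm[of u "max u (1-1/n)"] ga[of "min u (1/n)"] gb[of "max u (1-1/n)"]
    by auto
  have ab: "a \<le> b" using gab[of 0] by simp
  have gmeas[measurable]: "g \<in> borel_measurable borel"
    by (rule borel_measurable_mono) (auto simp: mono_def intro: gm)
  define x where "x k = g (real k / n)" for k :: nat
  have xXi: "x \<in> Xi n" unfolding Xi_def x_def using npos
    by (auto intro!: gm divide_right_mono)
  define e where "e (t::real) = \<bar>x (nat \<lfloor>t * n\<rfloor>) - q t\<bar> powr r" for t
  define B where "B = 2 powr r * (\<bar>a\<bar> powr r / n + (LINT t:{0<..<1/n}|lborel. \<bar>q t\<bar> powr r))
      + 2 powr r * (\<bar>b\<bar> powr r / n + (LINT t:{1-1/n..<1}|lborel. \<bar>q t\<bar> powr r))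
      + (b - a) powr r / n"
  have "opt_wdist r n M \<le> wdist r (emp_measure n x) M"
    unfolding opt_wdist_def
    by (rule cInf_lower) (auto intro!: bdd_belowI[of _ 0] simp: xXi wdist_def)
  also have "wdist r (emp_measure n x) M = (LINT t:{0<..<1}|lborel. e t) powr (1/r)"
    unfolding wdist_def e_def q_def using n
    by (intro arg_cong2[where f="(powr)"] refl set_lebesgue_integral_cong) (auto simp: emp_quantile[OF _ xXi])
  also have "\<dots> \<le> B powr (1/r)"
  proof -
    have "(LINT t:{0<..<1}|lborel. e t) \<le> B"
    proof (cases "set_integrable lborel {0<..<1} e")
      case False
      then have "(LINT t:{0<..<1}|lborel. e t) = 0"
        by (simp add: set_lebesgue_integral_def set_integrable_def not_integrable_integral_eq)
      moreover have "0 \<le> B"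
        unfolding B_def
        by (intro add_nonneg_nonneg mult_nonneg_nonneg divide_nonneg_nonneg set_integral_nonneg) auto
      ultimately show ?thesis by simp
    next
      case eint: True
      define h1 where "h1 t = 2 powr r * (\<bar>a\<bar> powr r + \<bar>q t\<bar> powr r)" for t
      define h2 where "h2 t = 2 powr r * (\<bar>b\<bar> powr r + \<bar>q t\<bar> powr r)" for t
      define h3 where "h3 t = (b - a) powr (r - 1) * (g t - g (t - 1/n))" for t
      define h where "h t = indicator {0<..<1/n} t * h1 t + indicator {1-1/n..<1} t * h2 t
          + indicator {1/n..<1} t * h3 t" for t
      have S1: "{0<..<1/n} \<subseteq> {0<..<1::real}" "{1-1/n..<1} \<subseteq> {0<..<1::real}"
        "{1/n..<1} \<subseteq> {0<..<1::real}" by (auto simp: subset_eq) (use n1 in linarith)+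
      have qint1: "set_integrable lborel {0<..<1/n} (\<lambda>t. \<bar>q t\<bar> powr r)"
        by (rule set_integrable_subset[OF qi[folded q_def]]) (use S1 in auto)
      have qint2: "set_integrable lborel {1-1/n..<1} (\<lambda>t. \<bar>q t\<bar> powr r)"
        by (rule set_integrable_subset[OF qi[folded q_def]]) (use S1 in auto)
      have cint: "set_integrable lborel A (\<lambda>_. c)" if "A \<in> sets borel" "emeasure lborel A < \<infinity>" for A :: "real set" and c :: real
        by (rule bounded_set_integrable[where C="\<bar>c\<bar>"]) (use that in auto)
      have int1: "set_integrable lborel {0<..<1/n} h1"
        unfolding h1_def using qint1 cint[of "{0<..<1/n}" "\<bar>a\<bar> powr r"]
        by (intro set_integrable_mult_right set_integral_add(1)) auto
      have int2: "set_integrable lborel {1-1/n..<1} h2"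
        unfolding h2_def using qint2 cint[of "{1-1/n..<1}" "\<bar>b\<bar> powr r"]
        by (intro set_integrable_mult_right set_integral_add(1)) auto
      have gbd: "\<bar>g t\<bar> \<le> \<bar>a\<bar> + \<bar>b\<bar>" for t using gab[of t] by linarith
      have gint: "set_integrable lborel {u..<v} g" for u v
        by (rule bounded_set_integrable[where C="\<bar>a\<bar> + \<bar>b\<bar>"]) (use gbd in auto)
      have gsint: "set_integrable lborel {u..<v} (\<lambda>t. g (t - 1/n))" for u v
        by (rule bounded_set_integrable[where C="\<bar>a\<bar> + \<bar>b\<bar>"]) (use gbd in auto)
      have int3: "set_integrable lborel {1/n..<1} h3"
        unfolding h3_def using gint gsint
        by (intro set_integrable_mult_right set_integral_diff(1)) auto
      have hint: "set_integrable lborel {0<..<1} h"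
        unfolding h_def
        by (intro set_integral_add(1)) (use int1 int2 int3 S1 set_integral_indicator_sub(2) in auto)
      have pw: "e t \<le> h t" if t: "t \<in> {0<..<1}" for t
      proof -
        define k where "k = nat \<lfloor>t * n\<rfloor>"
        have fl0: "0 \<le> \<lfloor>t * n\<rfloor>" using t npos by simp
        have rk: "real k = of_int \<lfloor>t * n\<rfloor>" unfolding k_def using fl0 by simp
        have kf: "real k \<le> t * n" "t * n < real k + 1"
          unfolding rk by linarith+
        have kn1: "real k / n \<le> t" using kf npos by (simp add: divide_le_eq)
        have kn2: "t - 1/n < real k / n"
        proof -
          have "(t * n - 1)/n < real k / n" using kf npos by (intro divide_strict_right_mono) auto
          moreover have "(t * n - 1)/n = t - 1/n" using npos by (simp add: field_simps)
          ultimately show ?thesis by simp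
        qed
        have et: "e t = \<bar>g (real k / n) - q t\<bar> powr r" unfolding e_def x_def k_def by simp
        have h3nn: "0 \<le> h3 t" if "1/n \<le> t" unfolding h3_def
          using gm[of "t - 1/n" t] by (intro mult_nonneg_nonneg) auto
        have h1nn: "0 \<le> h1 t" "0 \<le> h2 t" unfolding h1_def h2_def by auto
        consider "t < 1/n" | "1-1/n \<le> t" | "1/n \<le> t" "t < 1-1/n" by linarith
        then show ?thesis
        proof cases
          case 1
          then have "g (real k / n) = a" using kn1 by (intro ga) linarith
          then have "e t \<le> h1 t" unfolding et h1_def using r by (simp add: powr_diff_bound)
          moreover have "h t = h1 t" unfolding h_def using 1 t n1 by (auto simp: indicator_def) (use 1 n1 in linarith)+
          ultimately show ?thesis by simp
        next
          case 2
          have "(1 - 1/n) * n \<le> t * n" using 2 npos by (intro mult_right_mono) auto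
          moreover have "(1 - 1/n) * n = real n - 1" using npos by (simp add: field_simps)
          ultimately have "real n - 2 < real k" using kf by linarith
          then have "real n < real (k + 2)" by simp
          then have "n \<le> k + 1" by linarith
          then have "real n \<le> real k + 1" by linarith
          then have "(real n - 1) / n \<le> real k / n" using npos by (intro divide_right_mono) auto
          moreover have "(real n - 1) / n = 1 - 1/n" using npos by (simp add: field_simps)
          ultimately have "1 - 1/n \<le> real k / n" by simp
          then have "g (real k / n) = b" by (rule gb)
          then have "e t \<le> h2 t" unfolding et h2_def using r by (simp add: powr_diff_bound)
          moreover have "h t = h2 t + h3 t" unfolding h_def using 2 t n1 by (auto simp: indicator_def) (use 2 n1 in linarith)+
          moreover have "0 \<le> h3 t" using 2 n1 by (intro h3nn) linarith
          ultimately show ?thesis by simp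
        next
          case 3
          have qt: "q t = g t" using 3 by (intro gq[symmetric]) auto
          define d where "d = g t - g (real k / n)"
          have d0: "0 \<le> d" unfolding d_def using gm[OF kn1] by simp
          have d1: "d \<le> g t - g (t - 1/n)" unfolding d_def using gm[of "t - 1/n" "real k / n"] kn2 by simp
          have d2: "d \<le> b - a" unfolding d_def using gab[of t] gab[of "real k / n"] by simp
          have "e t = d powr r" unfolding et qt using d0 unfolding d_def by (simp add: abs_minus_commute)
          also have "\<dots> \<le> (b - a) powr (r - 1) * (g t - g (t - 1/n))"
          proof (cases "d = 0")
            case True
            then show ?thesis using gm[of "t - 1/n" t] by simp
          next
            case False
            have "d powr (r - 1) * d = d powr (r - 1 + 1)"
              by (subst powr_add) (use d0 False in auto)
            then have "d powr r = d powr (r - 1) * d" by simp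
            also have "\<dots> \<le> (b - a) powr (r - 1) * (g t - g (t - 1/n))"
              using d0 d1 d2 r by (intro mult_mono powr_mono2) auto
            finally show ?thesis .
          qed
          also have "\<dots> = h3 t" unfolding h3_def ..
          also have "h3 t = h t" unfolding h_def using 3 t n1 by (auto simp: indicator_def) (use 3 n1 in linarith)+
          finally show ?thesis .
        qed
      qed
      have "(LINT t:{0<..<1}|lborel. e t) \<le> (LINT t:{0<..<1}|lborel. h t)"
        by (rule set_integral_mono[OF eint hint pw])
      also have "(LINT t:{0<..<1}|lborel. h t) = B"
      proof -
        have m1: "measure lborel {0<..<1/real n} = 1/n" using n1 by simp
        have m2: "measure lborel {1-1/real n..<1} = 1/n" using n1 by simp
        have I1: "(LINT t:{0<..<1}|lborel. indicator {0<..<1/n} t * h1 t)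
            = 2 powr r * (\<bar>a\<bar> powr r / n + (LINT t:{0<..<1/n}|lborel. \<bar>q t\<bar> powr r))"
          unfolding set_integral_indicator_sub(1)[OF S1(1)] h1_def set_integral_mult_right
          using qint1 cint[of "{0<..<1/n}" "\<bar>a\<bar> powr r"]
          by (simp add: set_integral_add(2) set_integral_const m1)
        have I2: "(LINT t:{0<..<1}|lborel. indicator {1-1/n..<1} t * h2 t)
            = 2 powr r * (\<bar>b\<bar> powr r / n + (LINT t:{1-1/n..<1}|lborel. \<bar>q t\<bar> powr r))"
          unfolding set_integral_indicator_sub(1)[OF S1(2)] h2_def set_integral_mult_right
          using qint2 cint[of "{1-1/n..<1}" "\<bar>b\<bar> powr r"]
          by (simp add: set_integral_add(2) set_integral_const m2)
        have shift: "(LINT t:{1/n..<1}|lborel. g (t - 1/n)) = (LINT t:{0..<1-1/n}|lborel. g t)"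
        proof -
          have "(LINT t:{0..<1-1/n}|lborel. g t) = integral\<^sup>L lborel (\<lambda>u. indicator {0..<1-1/n} u * g u)"
            by (simp add: set_lebesgue_integral_def)
          also have "\<dots> = integral\<^sup>L lborel (\<lambda>x. indicator {0..<1-1/n} (-1/n + 1 * x) * g (-1/n + 1 * x))"
            using lborel_integral_real_affine[where c="1::real" and t="-1/n" and f="\<lambda>u. indicator {0..<1-1/n} u * g u"]
            by simp
          also have "\<dots> = integral\<^sup>L lborel (\<lambda>x. indicator {1/n..<1} x * g (x - 1/n))"
            by (intro Bochner_Integration.integral_cong refl) (auto simp: indicator_def)
          also have "\<dots> = (LINT t:{1/n..<1}|lborel. g (t - 1/n))"
            by (simp add: set_lebesgue_integral_def)
          finally show ?thesis by simp
        qed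
        have U1: "{1/n..<1} = {1/n..<1-1/n} \<union> {1-1/n..<1::real}" by auto (use n1 in linarith)+
        have U2: "{0..<1-1/n} = {0..<1/n} \<union> {1/n..<1-1/n::real}" by auto (use n1 in linarith)+
        have Gb: "(LINT t:{1-1/n..<1}|lborel. g t) = b / n"
        proof -
          have "(LINT t:{1-1/n..<1}|lborel. g t) = (LINT t:{1-1/n..<1}|lborel. b)"
            by (intro set_lebesgue_integral_cong) (auto intro: gb)
          then show ?thesis by (simp add: set_integral_const m2)
        qed
        have Ga: "(LINT t:{0..<1/n}|lborel. g t) = a / n"
        proof -
          have "(LINT t:{0..<1/n}|lborel. g t) = (LINT t:{0..<1/n}|lborel. a)"
            by (intro set_lebesgue_integral_cong) (auto intro: ga)
          then show ?thesis using n1 by (simp add: set_integral_const)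
        qed
        have G1: "(LINT t:{1/n..<1}|lborel. g t) = (LINT t:{1/n..<1-1/n}|lborel. g t) + b / n"
          unfolding U1 Gb[symmetric] by (rule set_integral_Un) (auto intro: gint)
        have G2: "(LINT t:{0..<1-1/n}|lborel. g t) = a / n + (LINT t:{1/n..<1-1/n}|lborel. g t)"
          unfolding U2 Ga[symmetric] by (rule set_integral_Un) (auto intro: gint)
        have I3: "(LINT t:{0<..<1}|lborel. indicator {1/n..<1} t * h3 t) = (b - a) powr r / n"
        proof -
          have "(LINT t:{0<..<1}|lborel. indicator {1/n..<1} t * h3 t) = (LINT t:{1/n..<1}|lborel. h3 t)"
            by (rule set_integral_indicator_sub(1)[OF S1(3)])
          also have "\<dots> = (b - a) powr (r - 1) * ((LINT t:{1/n..<1}|lborel. g t) - (LINT t:{1/n..<1}|lborel. g (t - 1/n)))"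
            unfolding h3_def set_integral_mult_right using gint gsint by (simp add: set_integral_diff(2))
          also have "\<dots> = (b - a) powr (r - 1) * (b - a) / n"
            unfolding shift G1 G2 by (simp add: algebra_simps add_divide_distrib[symmetric] diff_divide_distrib[symmetric])
          also have "(b - a) powr (r - 1) * (b - a) = (b - a) powr r"
          proof (cases "b - a = 0")
            case True then show ?thesis by simp
          next
            case False
            have "(b - a) powr (r - 1) * (b - a) = (b - a) powr (r - 1 + 1)"
              by (subst powr_add) (use ab False in auto)
            then show ?thesis by simp
          qed
          finally show ?thesis .
        qed
        have "(LINT t:{0<..<1}|lborel. h t) = (LINT t:{0<..<1}|lborel. indicator {0<..<1/n} t * h1 t)
          + (LINT t:{0<..<1}|lborel. indicator {1-1/n..<1} t * h2 t)
          + (LINT t:{0<..<1}|lborel. indicator {1/n..<1} t * h3 t)"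
          unfolding h_def
          using int1 int2 int3 S1 set_integral_indicator_sub(2)
          by (simp add: set_integral_add(1,2))
        then show ?thesis unfolding I1 I2 I3 B_def by simp
      qed
      finally show ?thesis .
    qed
    moreover have "0 \<le> (LINT t:{0<..<1}|lborel. e t)"
      by (intro set_integral_nonneg) (auto simp: e_def)
    ultimately show ?thesis using r by (intro powr_mono2) auto
  qed
  finally show ?thesis unfolding B_def q_def .
qed

end

context
  fixes M :: "real measure"
  assumes RD: "real_distribution M"
begin

interpretation real_distribution M by (rule RD)

lemma Q_supp:
  assumes t: "0 < t" "t < 1"
  shows "quantile_of M t \<in> supp_of M"
  unfolding supp_of_def
proof (intro CollectI allI impI)
  fix e :: real assume e: "e > 0"
  define z where "z = quantile_of M t"
  have 1: "t < cdf M (z + e/2)" unfolding z_def by (rule Q3[OF RD t]) (use e in simp)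
  have 2: "cdf M (z - e/2) \<le> t" unfolding z_def by (rule Q2[OF RD t]) (use e in simp)
  have m1: "measure M {z - e/2<..z + e/2} = cdf M (z + e/2) - cdf M (z - e/2)"
    using e by (intro finite_borel_measure.cdf_diff_eq[OF finite_borel_measure_M, symmetric]) simp
  have m2: "measure M {z - e/2<..z + e/2} \<le> measure M (ball z e)"
    using e by (intro finite_measure_mono) (auto simp: dist_real_def)
  from m1 m2 1 2 show "0 < measure M (ball (quantile_of M t) e)" unfolding z_def by linarith
qed

lemma tail_a:
  fixes s :: real and n :: nat
  assumes s: "s > 0" and n: "n \<ge> 2" and qs: "set_integrable lborel {0<..<1} (\<lambda>t. \<bar>quantile_of M t\<bar> powr s)"
  shows "\<bar>quantile_of M (1/n)\<bar> powr s / n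
      \<le> (LINT t:{0<..<1/n}|lborel. \<bar>quantile_of M t\<bar> powr s) + \<bar>quantile_of M (1/2)\<bar> powr s / n"
proof -
  let ?q = "quantile_of M"
  let ?a = "?q (1/n)"
  have npos: "(0::real) < n" using n by simp
  have n12: "1/n \<le> (1/2::real)" using n by (simp add: field_simps)
  have sub: "{0<..<1/n} \<subseteq> {0<..<1::real}" using n12 by auto
  have i1: "set_integrable lborel {0<..<1/n} (\<lambda>t. \<bar>?q t\<bar> powr s)"
    by (rule set_integrable_subset[OF qs]) (use sub in auto)
  have I0: "0 \<le> (LINT t:{0<..<1/n}|lborel. \<bar>?q t\<bar> powr s)"
    by (intro set_integral_nonneg) auto
  show ?thesis
  proof (cases "?a < 0")
    case True
    have "\<bar>?a\<bar> powr s / n = (LINT t:{0<..<1/n}|lborel. \<bar>?a\<bar> powr s)"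
      using npos by (simp add: set_integral_const)
    also have "\<dots> \<le> (LINT t:{0<..<1/n}|lborel. \<bar>?q t\<bar> powr s)"
    proof (rule set_integral_mono[OF _ i1])
      show "set_integrable lborel {0<..<1/n} (\<lambda>t. \<bar>?a\<bar> powr s)"
        by (rule bounded_set_integrable[where C="\<bar>?a\<bar> powr s"]) auto
      fix t assume t: "t \<in> {0<..<1/real n}"
      then have "?q t \<le> ?a" using n12 by (intro Q_mono[OF RD]) auto
      then show "\<bar>?a\<bar> powr s \<le> \<bar>?q t\<bar> powr s" using True s by (intro powr_mono2) auto
    qed
    finally show ?thesis using npos by (simp add: add_increasing2)
  next
    case False
    then have "?a \<le> ?q (1/2)" using n12 npos by (intro Q_mono[OF RD]) auto
    then have "\<bar>?a\<bar> powr s \<le> \<bar>?q (1/2)\<bar> powr s" using False s by (intro powr_mono2) auto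
    then have "\<bar>?a\<bar> powr s / n \<le> \<bar>?q (1/2)\<bar> powr s / n" using npos by (simp add: divide_right_mono)
    then show ?thesis using I0 by linarith
  qed
qed

lemma tail_b:
  fixes s :: real and n :: nat
  assumes s: "s > 0" and n: "n \<ge> 2" and qs: "set_integrable lborel {0<..<1} (\<lambda>t. \<bar>quantile_of M t\<bar> powr s)"
  shows "\<bar>quantile_of M (1 - 1/n)\<bar> powr s / n
      \<le> (LINT t:{1-1/n..<1}|lborel. \<bar>quantile_of M t\<bar> powr s) + \<bar>quantile_of M (1/2)\<bar> powr s / n"
proof -
  let ?q = "quantile_of M"
  let ?b = "?q (1 - 1/n)"
  have npos: "(0::real) < n" using n by simp
  have n12: "1/n \<le> (1/2::real)" using n by (simp add: field_simps)
  have sub: "{1-1/n..<1} \<subseteq> {0<..<1::real}" using n12 by auto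
  have i1: "set_integrable lborel {1-1/n..<1} (\<lambda>t. \<bar>?q t\<bar> powr s)"
    by (rule set_integrable_subset[OF qs]) (use sub in auto)
  have I0: "0 \<le> (LINT t:{1-1/n..<1}|lborel. \<bar>?q t\<bar> powr s)"
    by (intro set_integral_nonneg) auto
  have m: "measure lborel {1 - 1/real n..<1} = 1/n" using npos by simp
  show ?thesis
  proof (cases "?b > 0")
    case True
    have "\<bar>?b\<bar> powr s / n = (LINT t:{1-1/n..<1}|lborel. \<bar>?b\<bar> powr s)"
      using npos m by (simp add: set_integral_const)
    also have "\<dots> \<le> (LINT t:{1-1/n..<1}|lborel. \<bar>?q t\<bar> powr s)"
    proof (rule set_integral_mono[OF _ i1])
      show "set_integrable lborel {1-1/n..<1} (\<lambda>t. \<bar>?b\<bar> powr s)"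
        by (rule bounded_set_integrable[where C="\<bar>?b\<bar> powr s"]) auto
      fix t assume t: "t \<in> {1-1/real n..<1}"
      then have "?b \<le> ?q t" using n12 by (intro Q_mono[OF RD]) auto
      then show "\<bar>?b\<bar> powr s \<le> \<bar>?q t\<bar> powr s" using True s by (intro powr_mono2) auto
    qed
    finally show ?thesis using npos by (simp add: add_increasing2)
  next
    case False
    then have "?q (1/2) \<le> ?b" using n12 npos by (intro Q_mono[OF RD]) auto
    then have "\<bar>?b\<bar> powr s \<le> \<bar>?q (1/2)\<bar> powr s" using False s by (intro powr_mono2) auto
    then have "\<bar>?b\<bar> powr s / n \<le> \<bar>?q (1/2)\<bar> powr s / n" using npos by (simp add: divide_right_mono)
    then show ?thesis using I0 by linarith
  qed
qed

end

lemma E1: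
  fixes y r s :: real and n :: nat
  assumes "n > 0" "s > 0" "y \<ge> 0"
  shows "real n powr (1 - r/s) * (y powr r / n) = (y powr s / n) powr (r/s)"
proof -
  have npos: "(0::real) < n" using assms by simp
  have "(y powr s / n) powr (r/s) = y powr r / n powr (r/s)"
    using assms by (simp add: powr_divide powr_powr)
  moreover have "real n powr (1 - r/s) = n / n powr (r/s)"
    using npos by (simp add: powr_diff)
  ultimately show ?thesis by simp
qed


theorem theorem5p8:
  fixes r :: real and M :: "real measure"
  assumes "r \<ge> 1"
    and "prob_space M" and "sets M = sets borel"
    and "has_moment r M"
  shows "(\<forall>s>r. has_moment s M \<longrightarrow>
            ((\<lambda>n. real n powr (1/r - 1/s) * opt_wdist r n M) \<longlonglongrightarrow> 0))
       \<and> (bounded (supp_of M) \<longrightarrow>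
            limsup (\<lambda>n. ereal (real n powr (1/r) * opt_wdist r n M)) < \<infinity>)"
proof -
  have RD: "real_distribution M"
    using assms(2,3) by (simp add: real_distribution_def real_distribution_axioms_def)
  define q where "q = quantile_of M"
  have r0: "0 < r" using assms(1) by simp
  have mom: "set_integrable lborel {0<..<1} (\<lambda>t. \<bar>q t\<bar> powr p)" if "has_moment p M" for p
    unfolding q_def
    by (rule Q_integral(1)[OF RD, of "\<lambda>x. \<bar>x\<bar> powr p"]) (use that in \<open>auto simp: has_moment_def\<close>)
  have qi: "set_integrable lborel {0<..<1} (\<lambda>t. \<bar>q t\<bar> powr r)" by (rule mom[OF assms(4)])
  define a where "a n = q (1 / real n)" for n :: nat
  define b where "b n = q (1 - 1 / real n)" for n :: nat
  define I1 where "I1 p n = (LINT t:{0<..<1/real n}|lborel. \<bar>q t\<bar> powr p)" for p and n :: nat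
  define I2 where "I2 p n = (LINT t:{1-1/real n..<1}|lborel. \<bar>q t\<bar> powr p)" for p and n :: nat
  define B where "B n = 2 powr r * (\<bar>a n\<bar> powr r / n + I1 r n)
      + 2 powr r * (\<bar>b n\<bar> powr r / n + I2 r n) + (b n - a n) powr r / n" for n :: nat
  have DB: "opt_wdist r n M \<le> B n powr (1/r)" if "n \<ge> 2" for n
    using D[OF RD assms(1) that qi[unfolded q_def]] unfolding B_def a_def b_def I1_def I2_def q_def .
  have opt0: "0 \<le> opt_wdist r n M" for n
  proof -
    have "(\<lambda>_. 0) \<in> Xi n" by (simp add: Xi_def)
    then show ?thesis unfolding opt_wdist_def
      by (intro cInf_greatest) (auto simp: wdist_def)
  qed
  have ab: "a n \<le> b n" if "n \<ge> 2" for n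
    unfolding a_def b_def q_def using that by (intro Q_mono[OF RD]) (auto simp: field_simps)
  have I0: "0 \<le> I1 p n" "0 \<le> I2 p n" for p n unfolding I1_def I2_def
    by (intro set_integral_nonneg; simp)+
  have B0: "0 \<le> B n" if "n \<ge> 2" for n
    unfolding B_def using I0[of r n] by (intro add_nonneg_nonneg mult_nonneg_nonneg divide_nonneg_nonneg) auto
  show ?thesis
  proof (intro conjI allI impI)
    fix s assume s: "s > r" "has_moment s M"
    have s0: "0 < s" using s r0 by simp
    have qs: "set_integrable lborel {0<..<1} (\<lambda>t. \<bar>q t\<bar> powr s)" by (rule mom[OF s(2)])
    define ua where "ua n = \<bar>a n\<bar> powr s / n" for n :: nat
    define ub where "ub n = \<bar>b n\<bar> powr s / n" for n :: nat
    have inv1: "1 / real n \<le> 1" for n :: nat by (cases n) auto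
    have alim: "(\<lambda>n. I1 s n) \<longlonglongrightarrow> 0"
      unfolding I1_def
    proof (rule set_integral_tendsto_0[OF qs])
      show "{0<..<1 / real n} \<subseteq> {0<..<1}" for n using inv1[of n] by auto
      show "{0<..<1 / real n} \<in> sets borel" for n by simp
      fix t :: real
      show "\<forall>\<^sub>F n in sequentially. t \<notin> {0<..<1 / real n}"
      proof (cases "t > 0")
        case True
        obtain N :: nat where N: "1 / t < N" using reals_Archimedean2 by blast
        have Np: "(0::real) < N" using N True by (smt (verit) divide_pos_pos)
        show ?thesis unfolding eventually_sequentially
        proof (intro exI[of _ N] allI impI)
          fix n assume "N \<le> n"
          then have "real N \<le> real n" by simp
          then have "1 / real n \<le> 1 / real N" using Np by (intro divide_left_mono) auto
          moreover have "1 / real N < t" using N True Np by (simp add: field_simps)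
          ultimately show "t \<notin> {0<..<1 / real n}" by auto
        qed
      qed auto
    qed
    have blim: "(\<lambda>n. I2 s n) \<longlonglongrightarrow> 0"
    proof (rule LIMSEQ_offset[where k=2])
      show "(\<lambda>n. I2 s (n + 2)) \<longlonglongrightarrow> 0"
        unfolding I2_def
      proof (rule set_integral_tendsto_0[OF qs])
        show "{1 - 1 / real (n + 2)..<1} \<subseteq> {0<..<1}" for n
        proof -
          have h: "1 / (2 + real n) < 1" by (simp add: field_simps)
          show ?thesis by auto (use h in linarith)
        qed
        show "{1 - 1 / real (n + 2)..<1} \<in> sets borel" for n by simp
        fix t :: real
        show "\<forall>\<^sub>F n in sequentially. t \<notin> {1 - 1 / real (n + 2)..<1}"
        proof (cases "t < 1")
          case True
          obtain N :: nat where N: "1 / (1 - t) < N" using reals_Archimedean2 by blast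
          have Np: "(0::real) < N" using N True by (smt (verit) divide_pos_pos)
          show ?thesis unfolding eventually_sequentially
          proof (intro exI[of _ N] allI impI)
            fix n assume "N \<le> n"
            then have "real N \<le> real (n + 2)" by simp
            then have "1 / real (n + 2) \<le> 1 / real N" using Np by (intro divide_left_mono) auto
            moreover have "1 / real N < 1 - t" using N True Np by (simp add: field_simps)
            ultimately show "t \<notin> {1 - 1 / real (n + 2)..<1}" by auto
          qed
        qed auto
      qed
    qed
    have c0: "(\<lambda>n. \<bar>q (1/2)\<bar> powr s / real n) \<longlonglongrightarrow> 0" by (rule lim_const_over_n)
    have ualim: "ua \<longlonglongrightarrow> 0"
    proof (rule tendsto_sandwich[where f="\<lambda>_. 0" and h="\<lambda>n. I1 s n + \<bar>q (1/2)\<bar> powr s / real n"])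
      show "\<forall>\<^sub>F n in sequentially. 0 \<le> ua n" unfolding ua_def by simp
      show "\<forall>\<^sub>F n in sequentially. ua n \<le> I1 s n + \<bar>q (1/2)\<bar> powr s / real n"
        unfolding eventually_sequentially ua_def a_def I1_def q_def
        by (intro exI[of _ 2] allI impI tail_a[OF RD s0 _ qs[unfolded q_def]])
      show "(\<lambda>n. I1 s n + \<bar>q (1/2)\<bar> powr s / real n) \<longlonglongrightarrow> 0"
        using tendsto_add[OF alim c0] by simp
    qed simp
    have ublim: "ub \<longlonglongrightarrow> 0"
    proof (rule tendsto_sandwich[where f="\<lambda>_. 0" and h="\<lambda>n. I2 s n + \<bar>q (1/2)\<bar> powr s / real n"])
      show "\<forall>\<^sub>F n in sequentially. 0 \<le> ub n" unfolding ub_def by simp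
      show "\<forall>\<^sub>F n in sequentially. ub n \<le> I2 s n + \<bar>q (1/2)\<bar> powr s / real n"
        unfolding eventually_sequentially ub_def b_def I2_def q_def
        by (intro exI[of _ 2] allI impI tail_b[OF RD s0 _ qs[unfolded q_def]])
      show "(\<lambda>n. I2 s n + \<bar>q (1/2)\<bar> powr s / real n) \<longlonglongrightarrow> 0"
        using tendsto_add[OF blim c0] by simp
    qed simp
    have rs: "0 < r / s" using r0 s0 by simp
    have pw0: "(\<lambda>n. f n powr (r/s)) \<longlonglongrightarrow> 0" if "f \<longlonglongrightarrow> 0" "\<forall>\<^sub>F n in sequentially. 0 \<le> f n" for f
      using tendsto_zero_powrI[OF that(1) tendsto_const that(2) rs] .
    have L1: "(\<lambda>n. ua n powr (r/s)) \<longlonglongrightarrow> 0" by (rule pw0[OF ualim]) (simp add: ua_def)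
    have L2: "(\<lambda>n. ub n powr (r/s)) \<longlonglongrightarrow> 0" by (rule pw0[OF ublim]) (simp add: ub_def)
    have L3: "(\<lambda>n. (I1 s n + 1/n) powr (r/s)) \<longlonglongrightarrow> 0"
      by (rule pw0) (use tendsto_add[OF alim lim_inverse_n'] I0 in auto)
    have L4: "(\<lambda>n. (I2 s n + 1/n) powr (r/s)) \<longlonglongrightarrow> 0"
      by (rule pw0) (use tendsto_add[OF blim lim_inverse_n'] I0 in auto)
    define V where "V n = 2 powr r * (ua n powr (r/s) + 2 * (I1 s n + 1/n) powr (r/s))
        + 2 powr r * (ub n powr (r/s) + 2 * (I2 s n + 1/n) powr (r/s))
        + 2 powr r * (ub n powr (r/s) + ua n powr (r/s))" for n :: nat
    have Vlim: "V \<longlonglongrightarrow> 0"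
    proof -
      have "V \<longlonglongrightarrow> 2 powr r * (0 + 2 * 0) + 2 powr r * (0 + 2 * 0) + 2 powr r * (0 + 0)"
        unfolding V_def by (intro tendsto_intros L1 L2 L3 L4)
      then show ?thesis by simp
    qed
    have key: "real n powr (1/r - 1/s) * opt_wdist r n M \<le> V n powr (1/r)" if n: "n \<ge> 2" for n
    proof -
      have npos: "(0::real) < n" using n by simp
      define p where "p = real n powr (1 - r/s)"
      have p0: "0 \<le> p" unfolding p_def by simp
      have n12: "1/n \<le> (1/2::real)" using n by (simp add: field_simps)
      have S1: "{0<..<1/real n} \<subseteq> {0<..<1}" by auto (use n12 in linarith)
      have S2: "{1-1/real n..<1} \<subseteq> {0<..<1}" by auto (use n12 in linarith)
      have R1: "p * I1 r n \<le> 2 * (I1 s n + 1/n) powr (r/s)"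
        unfolding p_def I1_def
        by (rule rate_bound) (use r0 s npos set_integrable_subset[OF qs _ S1] set_integrable_subset[OF qi _ S1] in auto)
      have R2: "p * I2 r n \<le> 2 * (I2 s n + 1/n) powr (r/s)"
        unfolding p_def I2_def
        by (rule rate_bound) (use r0 s npos set_integrable_subset[OF qs _ S2] set_integrable_subset[OF qi _ S2] in auto)
      have Ea: "p * (\<bar>a n\<bar> powr r / n) = ua n powr (r/s)"
        unfolding p_def ua_def using npos s0 by (intro E1) auto
      have Eb: "p * (\<bar>b n\<bar> powr r / n) = ub n powr (r/s)"
        unfolding p_def ub_def using npos s0 by (intro E1) auto
      have Eab: "p * ((b n - a n) powr r / n) \<le> 2 powr r * (ub n powr (r/s) + ua n powr (r/s))"
      proof -
        have "(b n - a n) powr r \<le> 2 powr r * (\<bar>b n\<bar> powr r + \<bar>a n\<bar> powr r)"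
          using powr_diff_bound[of r "b n" "a n"] ab[OF n] r0 by simp
        then have "p * ((b n - a n) powr r / n) \<le> p * (2 powr r * (\<bar>b n\<bar> powr r + \<bar>a n\<bar> powr r) / n)"
          using p0 npos by (intro mult_left_mono divide_right_mono) auto
        also have "\<dots> = 2 powr r * (p * (\<bar>b n\<bar> powr r / n) + p * (\<bar>a n\<bar> powr r / n))"
          by (simp add: algebra_simps add_divide_distrib)
        finally show ?thesis unfolding Ea Eb .
      qed
      have pB: "p * B n \<le> V n"
      proof -
        have "p * B n = 2 powr r * (p * (\<bar>a n\<bar> powr r / n) + p * I1 r n)
            + 2 powr r * (p * (\<bar>b n\<bar> powr r / n) + p * I2 r n) + p * ((b n - a n) powr r / n)"
          unfolding B_def by (simp add: algebra_simps)
        also have "\<dots> \<le> V n"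
          unfolding V_def Ea Eb using R1 R2 Eab by (intro add_mono mult_left_mono) auto
        finally show ?thesis .
      qed
      have "real n powr (1/r - 1/s) * opt_wdist r n M \<le> real n powr (1/r - 1/s) * B n powr (1/r)"
        using DB[OF n] by (intro mult_left_mono) auto
      also have "real n powr (1/r - 1/s) * B n powr (1/r) = (p * B n) powr (1/r)"
      proof -
        have "p powr (1/r) = real n powr (1/r - 1/s)"
          unfolding p_def using npos r0 s0 by (simp add: powr_powr field_simps)
        then show ?thesis using p0 B0[OF n] by (simp add: powr_mult)
      qed
      also have "\<dots> \<le> V n powr (1/r)"
        using pB p0 B0[OF n] r0 by (intro powr_mono2) auto
      finally show ?thesis .
    qed
    show "(\<lambda>n. real n powr (1/r - 1/s) * opt_wdist r n M) \<longlonglongrightarrow> 0"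
    proof (rule tendsto_sandwich[where f="\<lambda>_. 0" and h="\<lambda>n. V n powr (1/r)"])
      show "\<forall>\<^sub>F n in sequentially. 0 \<le> real n powr (1/r - 1/s) * opt_wdist r n M"
        using opt0 by simp
      show "\<forall>\<^sub>F n in sequentially. real n powr (1/r - 1/s) * opt_wdist r n M \<le> V n powr (1/r)"
        unfolding eventually_sequentially by (intro exI[of _ 2] allI impI key)
      have V0: "\<forall>\<^sub>F n in sequentially. 0 \<le> V n"
        unfolding V_def using I0 by (auto intro!: add_nonneg_nonneg mult_nonneg_nonneg)
      show "(\<lambda>n. V n powr (1/r)) \<longlonglongrightarrow> 0"
        by (rule tendsto_zero_powrI[OF Vlim tendsto_const V0]) (use r0 in simp)
    qed simp
  next
    assume bd: "bounded (supp_of M)"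
    obtain C where C: "\<forall>x\<in>supp_of M. \<bar>x\<bar> \<le> C" using bd by (auto simp: bounded_iff)
    have qC: "\<bar>q t\<bar> \<le> C" if "0 < t" "t < 1" for t
      using Q_supp[OF RD that] C unfolding q_def by auto
    have C0: "0 \<le> C" using qC[of "1/2"] by simp
    define K where "K = 2 powr r * (C powr r + C powr r) + 2 powr r * (C powr r + C powr r) + (2*C) powr r"
    have K0: "0 \<le> K" unfolding K_def by simp
    have BK: "B n \<le> K / n" if n: "n \<ge> 2" for n
    proof -
      have npos: "(0::real) < n" using n by simp
      have n12: "1/n \<le> (1/2::real)" using n by (simp add: field_simps)
      have aC: "\<bar>a n\<bar> powr r \<le> C powr r" unfolding a_def
        using r0 qC[of "1/n"] n12 npos by (intro powr_mono2) auto
      have bC: "\<bar>b n\<bar> powr r \<le> C powr r" unfolding b_def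
        using r0 qC[of "1 - 1/n"] n12 npos by (intro powr_mono2) auto
      have abC: "(b n - a n) powr r \<le> (2 * C) powr r"
      proof -
        have "\<bar>a n\<bar> \<le> C" "\<bar>b n\<bar> \<le> C" unfolding a_def b_def using qC n12 npos by auto
        then show ?thesis using ab[OF n] r0 by (intro powr_mono2) auto
      qed
      have Iint: "(LINT t:A|lborel. \<bar>q t\<bar> powr r) \<le> C powr r / n"
        if A: "A \<subseteq> {0<..<1}" "A \<in> sets borel"
          "measure lborel A = 1/n" "emeasure lborel A < \<top>" for A
      proof -
        have "(LINT t:A|lborel. \<bar>q t\<bar> powr r) \<le> (LINT t:A|lborel. C powr r)"
        proof (rule set_integral_mono)
          show "set_integrable lborel A (\<lambda>t. \<bar>q t\<bar> powr r)"
            by (rule set_integrable_subset[OF qi]) (use A in auto)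
          show "set_integrable lborel A (\<lambda>t. C powr r)"
            by (rule bounded_set_integrable[where C="C powr r"]) (use A in auto)
          fix t assume "t \<in> A"
          then show "\<bar>q t\<bar> powr r \<le> C powr r" using A qC r0 by (intro powr_mono2) auto
        qed
        also have "\<dots> = C powr r / n" using A by (simp add: set_integral_const less_top[symmetric])
        finally show ?thesis .
      qed
      have I1C: "I1 r n \<le> C powr r / n"
      proof -
        have "{0<..<1/real n} \<subseteq> {0<..<1}" by auto (use n12 in linarith)
        then show ?thesis unfolding I1_def by (intro Iint) (use npos in auto)
      qed
      have I2C: "I2 r n \<le> C powr r / n"
      proof -
        have "{1-1/real n..<1} \<subseteq> {0<..<1}" by auto (use n12 in linarith)
        then show ?thesis unfolding I2_def by (intro Iint) (use npos in auto)
      qed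
      have "B n \<le> 2 powr r * (C powr r / n + C powr r / n) + 2 powr r * (C powr r / n + C powr r / n)
          + (2 * C) powr r / n"
        unfolding B_def using aC bC abC I1C I2C npos
        by (intro add_mono mult_left_mono divide_right_mono) auto
      also have "\<dots> = K / n" unfolding K_def by (simp add: add_divide_distrib algebra_simps)
      finally show ?thesis .
    qed
    have ev: "eventually (\<lambda>n. ereal (real n powr (1/r) * opt_wdist r n M) \<le> ereal (K powr (1/r))) sequentially"
      unfolding eventually_sequentially
    proof (intro exI[of _ 2] allI impI)
      fix n :: nat assume n: "n \<ge> 2"
      have npos: "(0::real) < n" using n by simp
      have "real n powr (1/r) * opt_wdist r n M \<le> real n powr (1/r) * (K / n) powr (1/r)"
      proof (intro mult_left_mono)
        show "opt_wdist r n M \<le> (K / n) powr (1/r)"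
          using DB[OF n] B0[OF n] BK[OF n] r0 by (meson order_trans powr_mono2 less_imp_le zero_le_divide_1_iff)
      qed simp
      also have "\<dots> = K powr (1/r)" using npos K0 by (simp add: powr_divide)
      finally show "ereal (real n powr (1/r) * opt_wdist r n M) \<le> ereal (K powr (1/r))" by simp
    qed
    have "limsup (\<lambda>n. ereal (real n powr (1/r) * opt_wdist r n M)) \<le> ereal (K powr (1/r))"
      by (rule Limsup_bounded[OF ev])
    then show "limsup (\<lambda>n. ereal (real n powr (1/r) * opt_wdist r n M)) < \<infinity>"
      by (rule le_less_trans) simp
  qed
qed

end
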